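(* Let $\mathscr T^+$ be the set of $(t,\omega)\in[0,T]\times\Omega$ such that $\nu(\{x:\psi_t(x)<0\})=0$, and $\mathscr T^-$ the set of $(t,\omega)$ such that $\nu(\{x:\psi_t(x)>0\})=0$. Assume (1) $\varphi_t<\int_{\mathbb R^*}\psi_t(x)\,\nu(dx)$ for all $(t,\omega)\in\mathscr T^+$; (2) $\varphi_t>\int_{\mathbb R^*}\psi_t(x)\,\nu(dx)$ for all $(t,\omega)\in\mathscr T^-$. Then for every $u\in\mathrm L^2(\nu)\cap\mathrm L^\infty(\nu)$ and every $t\in[0,T]$ (and $\omega$), the function $\lambda:\mathcal C\to\mathbb R$, $$\lambda(\pi)=\int_{\mathbb R^*}g_\alpha\big(u(x)-\pi\psi_t(x)\big)\,\nu(dx)-\pi\varphi_t,$$ admits a minimum in $\mathcal C$. If $\mathcal C=\mathbb R$, the minimum is unique.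
   Context: Setting: $T>0$; $\nu$ is a positive measure on $\mathbb R^*=\mathbb R\setminus\{0\}$ with $\nu(\{0\})=0$ and $\int(1\wedge|x|^2)\nu(dx)<\infty$ (the Lévy measure of a Poisson point process on a filtered probability space $(\Omega,\mathcal F,(\mathcal F_t),\mathbb P)$ which, together with an independent Brownian motion, generates the filtration). $\varphi=(\varphi_t)$ is a uniformly bounded predictable real process and $\psi=\psi_t(x)$ is a uniformly bounded predictable (i.e. $\mathcal P\otimes\mathcal B(\mathbb R^* )$-measurable) process with $\mathbb E\int_0^T\int\psi_t(x)^2\nu(dx)dt<\infty$ and $\psi>-1$. $\alpha>0$ and $g_\alpha(y)=\frac{e^{\alpha y}-\alpha y-1}{\alpha}$. $\mathcal C\subseteq\mathbb R$ is a closed set with $0\in\mathcal C$. $\mathrm L^2(\nu)$ and $\mathrm L^\infty(\nu)$ denote measurable $u:\mathbb R\to\mathbb R$ that are square-integrable w.r.t. $\nu$, resp. $\nu$-a.e. bounded. *)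

theory Defs
  imports "HOL-Analysis.Analysis"
begin

definition g_alpha :: "real \<Rightarrow> real \<Rightarrow> real" where
  "g_alpha \<alpha> y = (exp (\<alpha> * y) - \<alpha> * y - 1) / \<alpha>"

text \<open>The objective lambda(pi) = int g_alpha(u(x) - pi psi(x)) nu(dx) - pi phi,
  for fixed (t, omega), with psi = psi_t(omega, .) and phi = phi_t(omega).\<close>
definition lam_obj :: "real measure \<Rightarrow> real \<Rightarrow> (real \<Rightarrow> real) \<Rightarrow> (real \<Rightarrow> real) \<Rightarrow> real \<Rightarrow> real \<Rightarrow> real" where
  "lam_obj \<nu> \<alpha> u psi phi \<pi> = (\<integral>x. g_alpha \<alpha> (u x - \<pi> * psi x) \<partial>\<nu>) - \<pi> * phi"

end

theory Submission
  imports Defs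
begin


lemma g_nonneg: "\<alpha> > 0 \<Longrightarrow> g_alpha \<alpha> y \<ge> 0"
  unfolding g_alpha_def using exp_ge_add_one_self[of "\<alpha>*y"] by (intro divide_nonneg_pos) (auto simp: algebra_simps)

lemma g_lin_lower: "\<alpha> > 0 \<Longrightarrow> g_alpha \<alpha> y \<ge> - y - 1/\<alpha>"
  unfolding g_alpha_def using exp_gt_zero[of "\<alpha>*y"]
  by (simp add: field_simps)

lemma g_slope_lower:
  assumes a: "\<alpha> > 0" and M: "M \<ge> 0"
  shows "\<exists>c. \<forall>y. g_alpha \<alpha> y \<ge> M * y - c"
proof -
  define K where "K = M + 1"
  have K: "K > 0" using M by (simp add: K_def)
  have "g_alpha \<alpha> y \<ge> M * y - (K * ln K - K + 1) / \<alpha>" for y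
  proof -
    have "exp (\<alpha>*y) = K * exp (\<alpha>*y - ln K)" using K by (simp add: exp_diff)
    also have "\<dots> \<ge> K * (1 + (\<alpha>*y - ln K))"
      using K exp_ge_add_one_self[of "\<alpha>*y - ln K"] by simp
    finally have "exp (\<alpha>*y) \<ge> K * (1 + (\<alpha>*y - ln K))" .
    then have "exp (\<alpha>*y) - \<alpha>*y - 1 \<ge> \<alpha> * (M * y) - (K * ln K - K + 1)"
      by (simp add: K_def algebra_simps)
    then have "(exp (\<alpha>*y) - \<alpha>*y - 1)/\<alpha> \<ge> (\<alpha> * (M * y) - (K * ln K - K + 1))/\<alpha>"
      using a by (intro divide_right_mono) auto
    then show ?thesis unfolding g_alpha_def using a
      by (simp add: diff_divide_distrib)
  qed
  then show ?thesis by blast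
qed

lemma g_quad_upper:
  assumes a: "\<alpha> > 0" and y: "\<bar>y\<bar> \<le> R"
  shows "g_alpha \<alpha> y \<le> (\<alpha> * exp (\<alpha> * R) / 2) * y\<^sup>2"
proof -
  obtain t where t: "\<bar>t\<bar> \<le> \<bar>\<alpha>*y\<bar>" "exp (\<alpha>*y) = (\<Sum>m<2. ((\<alpha>*y) ^ m) / fact m) + (exp t / fact 2) * (\<alpha>*y) ^ 2"
    using Maclaurin_exp_le[of "\<alpha>*y" 2] by blast
  have e: "exp (\<alpha>*y) - \<alpha>*y - 1 = exp t / 2 * (\<alpha>*y)^2" using t(2) by (simp add: numeral_2_eq_2)
  have "\<bar>\<alpha>*y\<bar> \<le> \<alpha> * R" using a y by (simp add: abs_mult mult_left_mono)
  then have "exp t \<le> exp (\<alpha>*R)" using t(1) by simp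
  then have "exp t / 2 * (\<alpha>*y)^2 \<le> exp (\<alpha>*R) / 2 * (\<alpha>*y)^2"
    by (intro mult_right_mono) auto
  then show ?thesis unfolding g_alpha_def e using a
    by (simp add: field_simps power2_eq_square)
qed

lemma g_convex: "\<alpha> > 0 \<Longrightarrow> 0 \<le> s \<Longrightarrow> s \<le> 1 \<Longrightarrow>
   g_alpha \<alpha> ((1-s)*a + s*b) \<le> (1-s) * g_alpha \<alpha> a + s * g_alpha \<alpha> b"
proof -
  assume h: "\<alpha> > 0" "0 \<le> s" "s \<le> 1"
  have "exp ((1-s)*(\<alpha>*a) + s*(\<alpha>*b)) \<le> (1-s)*exp (\<alpha>*a) + s*exp(\<alpha>*b)"
    using convex_onD[OF exp_convex, of s "\<alpha>*a" "\<alpha>*b"] h by (simp add: algebra_simps)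
  then have "exp (\<alpha>*((1-s)*a + s*b)) - \<alpha>*((1-s)*a + s*b) - 1 \<le> (1-s) * (exp (\<alpha>*a) - \<alpha>*a - 1) + s * (exp (\<alpha>*b) - \<alpha>*b - 1)"
    by (simp add: algebra_simps)
  then have "(exp (\<alpha>*((1-s)*a + s*b)) - \<alpha>*((1-s)*a + s*b) - 1)/\<alpha> \<le> ((1-s) * (exp (\<alpha>*a) - \<alpha>*a - 1) + s * (exp (\<alpha>*b) - \<alpha>*b - 1))/\<alpha>"
    using h by (intro divide_right_mono) auto
  then show ?thesis unfolding g_alpha_def
    by (simp add: add_divide_distrib)
qed

lemma g_strict_mid:
  assumes a: "\<alpha> > 0" and ne: "x \<noteq> y"
  shows "g_alpha \<alpha> ((x+y)/2) < (g_alpha \<alpha> x + g_alpha \<alpha> y)/2"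
proof -
  have "exp (\<alpha>*x/2) \<noteq> exp (\<alpha>*y/2)" using a ne by simp
  then have "0 < (exp (\<alpha>*x/2) - exp (\<alpha>*y/2))^2" by simp
  also have "(exp (\<alpha>*x/2) - exp (\<alpha>*y/2))^2 = exp (\<alpha>*x) + exp(\<alpha>*y) - 2*exp(\<alpha>*((x+y)/2))"
    by (simp add: power2_eq_square algebra_simps flip: exp_add)
  finally have "exp (\<alpha>*((x+y)/2)) - \<alpha>*((x+y)/2) - 1 < ((exp (\<alpha>*x) - \<alpha>*x - 1) + (exp (\<alpha>*y) - \<alpha>*y - 1))/2"
    by (simp add: field_simps)
  then have "(exp (\<alpha>*((x+y)/2)) - \<alpha>*((x+y)/2) - 1)/\<alpha> < (((exp (\<alpha>*x) - \<alpha>*x - 1) + (exp (\<alpha>*y) - \<alpha>*y - 1))/2)/\<alpha>"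
    using a by (intro divide_strict_right_mono) auto
  moreover have "(g_alpha \<alpha> x + g_alpha \<alpha> y)/2 = (((exp (\<alpha>*x) - \<alpha>*x - 1) + (exp (\<alpha>*y) - \<alpha>*y - 1))/2)/\<alpha>"
    unfolding g_alpha_def by (simp add: add_divide_distrib diff_divide_distrib mult.commute)
  moreover have "g_alpha \<alpha> ((x+y)/2) = (exp (\<alpha>*((x+y)/2)) - \<alpha>*((x+y)/2) - 1)/\<alpha>"
    by (simp only: g_alpha_def)
  ultimately show ?thesis by linarith
qed



lemma convex_grow:
  fixes L :: "real \<Rightarrow> real"
  assumes cv: "convex_on UNIV L" and s: "0 < s" "s < 1" and y: "L (s * y) > L 0"
  shows "L y > L 0"
proof -
  have "L ((1 - s) *\<^sub>R 0 + s *\<^sub>R y) \<le> (1-s) * L 0 + s * L y"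
    using convex_onD[OF cv, of s 0 y] s by auto
  then have "L (s*y) \<le> (1-s) * L 0 + s * L y" by simp
  then have "s * (L y - L 0) > 0" using y by (simp add: algebra_simps)
  then show ?thesis using s by (simp add: zero_less_mult_iff)
qed

lemma convex_min_exists:
  fixes L :: "real \<Rightarrow> real"
  assumes cv: "convex_on UNIV L" and a: "a > 0" "L a > L 0" and b: "b < 0" "L b > L 0"
    and C: "closed C" "0 \<in> C"
  shows "\<exists>\<pi>\<in>C. \<forall>\<pi>'\<in>C. L \<pi> \<le> L \<pi>'"
proof -
  have cont: "continuous_on UNIV L" by (rule convex_on_continuous[OF open_UNIV cv])
  let ?S = "C \<inter> {b..a}"
  have "compact ?S" using C by (intro closed_Int_compact) auto
  moreover have "?S \<noteq> {}" using C a b by auto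
  ultimately obtain \<pi> where \<pi>: "\<pi> \<in> ?S" "\<forall>y\<in>?S. L \<pi> \<le> L y"
    using continuous_attains_inf[of ?S L] continuous_on_subset[OF cont] by blast
  have L0: "L \<pi> \<le> L 0" using \<pi> C a b by auto
  have up: "L y > L 0" if "y > a" for y
  proof -
    have "a / y * y = a" using that a by simp
    then show ?thesis using convex_grow[OF cv, of "a/y" y] a that by auto
  qed
  have lo: "L y > L 0" if "y < b" for y
  proof -
    have "b / y * y = b" using that b by simp
    moreover have "b / y < 1" using that b by (simp add: divide_less_eq)
    moreover have "0 < b / y" using that b by (simp add: divide_neg_neg)
    ultimately show ?thesis using convex_grow[OF cv, of "b/y" y] b by auto
  qed
  show ?thesis
  proof (intro bexI[of _ \<pi>] ballI)
    fix y assume "y \<in> C"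
    show "L \<pi> \<le> L y"
    proof (cases "y \<in> {b..a}")
      case True with \<pi> \<open>y \<in> C\<close> show ?thesis by auto
    next
      case False
      then have "y > a \<or> y < b" by auto
      with up lo L0 show ?thesis by force
    qed
  qed (use \<pi> in auto)
qed


lemma const_over_Suc: "(\<lambda>n. k / real (Suc n)) \<longlonglongrightarrow> 0"
proof -
  have "(\<lambda>n. k * (1 / real (Suc n))) \<longlonglongrightarrow> k * 0"
    by (intro tendsto_mult tendsto_const LIMSEQ_Suc[OF lim_inverse_n'])
  then show ?thesis by simp
qed

lemma aux1: "(m::real) > 0 \<Longrightarrow> (M*(x - m*y) - c)/m = M*x/m - M*y - c/m" by (simp add: field_simps)
lemma aux2: "(m::real) > 0 \<Longrightarrow> (-(x - m*y) - d)/m = y - (x + d)/m" by (simp add: field_simps)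

lemma aux3: "(m::real) > 0 \<Longrightarrow> x - m*p \<le> l \<Longrightarrow> x/m \<le> p + l/m" by (simp add: field_simps)

locale S =
  fixes \<nu> :: "real measure" and \<alpha> :: real and u f :: "real \<Rightarrow> real" and p B K :: real
  assumes a: "\<alpha> > 0" and nsets: "sets \<nu> = sets borel"
  and um: "u \<in> borel_measurable borel" and fm: "f \<in> borel_measurable borel"
  and u2: "integrable \<nu> (\<lambda>x. (u x)\<^sup>2)" and f2: "integrable \<nu> (\<lambda>x. (f x)\<^sup>2)"
  and uB: "AE x in \<nu>. \<bar>u x\<bar> \<le> B" and fK: "AE x in \<nu>. \<bar>f x\<bar> \<le> K"
begin

lemma um' [measurable]: "u \<in> borel_measurable \<nu>"
  using um measurable_cong_sets[OF nsets, of borel borel] by metis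
lemma fm' [measurable]: "f \<in> borel_measurable \<nu>"
  using fm measurable_cong_sets[OF nsets, of borel borel] by metis

lemma hm [measurable]: "(\<lambda>x. g_alpha \<alpha> (u x - \<pi> * f x)) \<in> borel_measurable \<nu>"
  unfolding g_alpha_def by measurable

lemma integ: "integrable \<nu> (\<lambda>x. g_alpha \<alpha> (u x - \<pi> * f x))"
proof -
  define R where "R = B + \<bar>\<pi>\<bar> * K"
  define c where "c = \<alpha> * exp (\<alpha> * R) / 2"
  have c: "c \<ge> 0" using a by (simp add: c_def)
  show ?thesis
  proof (rule Bochner_Integration.integrable_bound)
    show "integrable \<nu> (\<lambda>x. c * (2 * (u x)\<^sup>2 + 2 * \<pi>\<^sup>2 * (f x)\<^sup>2))"
      using u2 f2 by auto
    show "AE x in \<nu>. norm (g_alpha \<alpha> (u x - \<pi> * f x)) \<le> norm (c * (2 * (u x)\<^sup>2 + 2 * \<pi>\<^sup>2 * (f x)\<^sup>2))"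
      using uB fK
    proof eventually_elim
      case (elim x)
      have "\<bar>\<pi> * f x\<bar> \<le> \<bar>\<pi>\<bar> * K" using elim by (simp add: abs_mult mult_left_mono)
      then have "\<bar>u x - \<pi> * f x\<bar> \<le> R" using elim unfolding R_def by linarith
      then have "g_alpha \<alpha> (u x - \<pi> * f x) \<le> c * (u x - \<pi> * f x)\<^sup>2"
        using g_quad_upper[OF a] unfolding c_def by blast
      also have "\<dots> \<le> c * (2 * (u x)\<^sup>2 + 2 * \<pi>\<^sup>2 * (f x)\<^sup>2)"
      proof (rule mult_left_mono[OF _ c])
        have "0 \<le> (u x + \<pi> * f x)\<^sup>2" by simp
        then show "(u x - \<pi> * f x)\<^sup>2 \<le> 2 * (u x)\<^sup>2 + 2 * \<pi>\<^sup>2 * (f x)\<^sup>2"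
          by (simp add: power2_eq_square algebra_simps)
      qed
      finally show ?case using g_nonneg[OF a] c by simp
    qed
  qed simp
qed

definition L where "L \<pi> = lam_obj \<nu> \<alpha> u f p \<pi>"

lemma L_convex: "convex_on UNIV L"
proof (rule convex_onI)
  fix t x y :: real assume t: "0 < t" "t < 1"
  have pw: "g_alpha \<alpha> (u z - ((1 - t) *\<^sub>R x + t *\<^sub>R y) * f z) \<le>
      (1-t) * g_alpha \<alpha> (u z - x * f z) + t * g_alpha \<alpha> (u z - y * f z)" for z
  proof -
    have "u z - ((1 - t) *\<^sub>R x + t *\<^sub>R y) * f z = (1-t) * (u z - x * f z) + t * (u z - y * f z)"
      by (simp add: algebra_simps)
    then show ?thesis using g_convex[OF a, of t] t by simp
  qed
  have "(\<integral>z. g_alpha \<alpha> (u z - ((1 - t) *\<^sub>R x + t *\<^sub>R y) * f z) \<partial>\<nu>) \<le>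
      (\<integral>z. (1-t) * g_alpha \<alpha> (u z - x * f z) + t * g_alpha \<alpha> (u z - y * f z) \<partial>\<nu>)"
    using pw integ by (intro integral_mono) auto
  also have "\<dots> = (1-t) * (\<integral>z. g_alpha \<alpha> (u z - x * f z) \<partial>\<nu>) + t * (\<integral>z. g_alpha \<alpha> (u z - y * f z) \<partial>\<nu>)"
    using integ by simp
  finally show "L ((1 - t) *\<^sub>R x + t *\<^sub>R y) \<le> (1 - t) * L x + t * L y"
    unfolding L_def lam_obj_def by (simp add: algebra_simps)
qed simp

lemma space_nu: "space \<nu> = UNIV"
  using sets_eq_imp_space_eq[OF nsets] by simp

definition I where "I \<pi> = (\<integral>x. g_alpha \<alpha> (u x - \<pi> * f x) \<partial>\<nu>)"

lemma I0: "I \<pi> \<ge> 0"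
  unfolding I_def using g_nonneg[OF a] by (intro integral_nonneg_AE) auto

lemma LI: "L \<pi> = I \<pi> - \<pi> * p"
  unfolding L_def lam_obj_def I_def by simp

lemma one_side:
  assumes H: "emeasure \<nu> {x. f x < 0} = 0 \<Longrightarrow> ereal p < enn2ereal (\<integral>\<^sup>+ x. ennreal (f x) \<partial>\<nu>)"
  shows "\<exists>a>0. L a > L 0"
proof (rule ccontr)
  assume "\<not> ?thesis"
  then have le: "\<And>a. a > 0 \<Longrightarrow> L a \<le> L 0" by (meson not_less)
  show False
  proof (cases "p < 0")
    case True
    define n where "n = (\<bar>L 0\<bar> + 1) / (-p)"
    have n: "n > 0" using True unfolding n_def by (intro divide_pos_pos) auto
    have "-n*p = \<bar>L 0\<bar> + 1" using True by (simp add: n_def)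
    then have "L n > L 0" using LI[of n] I0[of n] by linarith
    with le[OF n] show False by simp
  next
    case False
    then have p0: "p \<ge> 0" by simp
    have key: "(\<integral>\<^sup>+x. ennreal (max (- M * f x) (f x)) \<partial>\<nu>) \<le> ennreal p" if M: "M \<ge> 0" for M
    proof -
      obtain c where c: "\<And>y. g_alpha \<alpha> y \<ge> M*y - c" using g_slope_lower[OF a M] by blast
      define F where "F n x = ennreal (g_alpha \<alpha> (u x - real (Suc n) * f x) / real (Suc n))" for n x
      define G where "G n x = max (M * u x / real(Suc n) - M * f x - c / real (Suc n)) (f x - (u x + 1/\<alpha>) / real (Suc n))" for n x
      have FG: "ennreal (G n x) \<le> F n x" for n x
      proof -
        let ?m = "real (Suc n)"
        have m: "?m > 0" by simp
        have "g_alpha \<alpha> (u x - ?m * f x) \<ge> M*(u x - ?m * f x) - c" by (rule c)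
        then have "g_alpha \<alpha> (u x - ?m * f x)/?m \<ge> (M*(u x - ?m * f x) - c)/?m"
          using m by (intro divide_right_mono) auto
        moreover have "(M*(u x - ?m * f x) - c)/?m = M * u x / ?m - M * f x - c / ?m"
          using m by (rule aux1)
        ultimately have A: "g_alpha \<alpha> (u x - ?m * f x)/?m \<ge> M * u x / ?m - M * f x - c / ?m"
          by simp
        have "g_alpha \<alpha> (u x - ?m * f x) \<ge> -(u x - ?m * f x) - 1/\<alpha>" by (rule g_lin_lower[OF a])
        then have "g_alpha \<alpha> (u x - ?m * f x)/?m \<ge> (-(u x - ?m * f x) - 1/\<alpha>)/?m"
          using m by (intro divide_right_mono) auto
        moreover have "(-(u x - ?m * f x) - 1/\<alpha>)/?m = f x - (u x + 1/\<alpha>) / ?m"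
          using m by (rule aux2)
        ultimately have B: "g_alpha \<alpha> (u x - ?m * f x)/?m \<ge> f x - (u x + 1/\<alpha>) / ?m"
          by simp
        show ?thesis unfolding F_def G_def using A B by (intro ennreal_leI) auto
      qed
      have Glim: "(\<lambda>n. G n x) \<longlonglongrightarrow> max (- M * f x) (f x)" for x
      proof -
        have "(\<lambda>n. max (M * u x / real(Suc n) - M * f x - c / real (Suc n)) (f x - (u x + 1/\<alpha>) / real (Suc n))) \<longlonglongrightarrow> max (0 - M * f x - 0) (f x - 0)"
          by (intro tendsto_max tendsto_diff const_over_Suc tendsto_const)
        then show ?thesis by (simp add: G_def)
      qed
      have pw: "ennreal (max (- M * f x) (f x)) \<le> liminf (\<lambda>n. F n x)" for x
      proof -
        have "ennreal (max (- M * f x) (f x)) = liminf (\<lambda>n. ennreal (G n x))"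
          using lim_imp_Liminf[OF trivial_limit_sequentially tendsto_ennrealI[OF Glim]] by simp
        also have "\<dots> \<le> liminf (\<lambda>n. F n x)" using FG by (intro Liminf_mono) auto
        finally show ?thesis .
      qed
      have Fm: "F n \<in> borel_measurable \<nu>" for n unfolding F_def g_alpha_def by measurable
      have "(\<integral>\<^sup>+x. ennreal (max (- M * f x) (f x)) \<partial>\<nu>) \<le> (\<integral>\<^sup>+x. liminf (\<lambda>n. F n x) \<partial>\<nu>)"
        by (intro nn_integral_mono pw)
      also have "\<dots> \<le> liminf (\<lambda>n. integral\<^sup>N \<nu> (F n))" by (rule nn_integral_liminf[OF Fm])
      also have "\<dots> \<le> liminf (\<lambda>n. ennreal (p + L 0 / real (Suc n)))"
      proof (intro Liminf_mono always_eventually allI)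
        fix n
        let ?m = "real (Suc n)"
        have "integral\<^sup>N \<nu> (F n) = ennreal (I ?m / ?m)"
          unfolding F_def I_def
          using integ g_nonneg[OF a] by (subst nn_integral_eq_integral) auto
        moreover have "I ?m / ?m \<le> p + L 0 / ?m"
          using le[of ?m] LI[of ?m] by (intro aux3) auto
        ultimately show "integral\<^sup>N \<nu> (F n) \<le> ennreal (p + L 0 / ?m)" by (simp add: ennreal_leI)
      qed
      also have "\<dots> = ennreal p"
      proof -
        have "(\<lambda>n. p + L 0 / real (Suc n)) \<longlonglongrightarrow> p + 0"
          by (intro tendsto_add tendsto_const const_over_Suc)
        then show ?thesis
          using lim_imp_Liminf[OF trivial_limit_sequentially tendsto_ennrealI] by simp
      qed
      finally show ?thesis .
    qed
    show False
    proof (cases "emeasure \<nu> {x. f x < 0} = 0")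
      case True
      have "(\<integral>\<^sup>+x. ennreal (f x) \<partial>\<nu>) = (\<integral>\<^sup>+x. ennreal (max (- 0 * f x) (f x)) \<partial>\<nu>)"
        by (simp add: ennreal_max_0)
      also have "\<dots> \<le> ennreal p" using key[of 0] by simp
      finally have "enn2ereal (\<integral>\<^sup>+x. ennreal (f x) \<partial>\<nu>) \<le> enn2ereal (ennreal p)"
        by (simp add: less_eq_ennreal.rep_eq)
      then have "enn2ereal (\<integral>\<^sup>+x. ennreal (f x) \<partial>\<nu>) \<le> ereal p" using p0 by (simp add: enn2ereal_ennreal)
      with H[OF True] show False by simp
    next
      case False
      define X where "X = (\<integral>\<^sup>+x. ennreal (- f x) \<partial>\<nu>)"
      have X: "X \<noteq> 0"
      proof
        assume "X = 0"
        then have "AE x in \<nu>. ennreal (- f x) = 0" unfolding X_def by (subst (asm) nn_integral_0_iff_AE) auto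
        then have ae: "AE x in \<nu>. \<not> f x < 0" by eventually_elim (simp add: ennreal_eq_0_iff)
        have ms: "{x \<in> space \<nu>. f x < 0} \<in> sets \<nu>" by measurable
        have "emeasure \<nu> {x. f x < 0} = 0"
          using ae AE_iff_measurable[of "{x. f x < 0}" \<nu> "\<lambda>x. \<not> f x < 0"] ms by (simp add: space_nu)
        with False show False by simp
      qed
      obtain M where M: "M \<ge> 0" "ennreal p < ennreal M * X"
      proof (cases X rule: ennreal_cases)
        case (real r)
        with X have r: "r > 0" by auto
        define M where "M = (p + 1) / r"
        have M0: "M \<ge> 0" using r p0 by (simp add: M_def)
        have "ennreal M * X = ennreal (p + 1)" using r M0 by (simp add: real M_def ennreal_mult[symmetric])
        then have "ennreal p < ennreal M * X" using p0 by (simp add: ennreal_less_iff)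
        then show ?thesis using that M0 by blast
      next
        case top
        then show ?thesis using that[of 1] by simp
      qed
      have "ennreal M * X = (\<integral>\<^sup>+x. ennreal M * ennreal (- f x) \<partial>\<nu>)"
        unfolding X_def by (rule nn_integral_cmult[symmetric]) measurable
      also have "\<dots> = (\<integral>\<^sup>+x. ennreal (M * (- f x)) \<partial>\<nu>)"
        by (simp only: ennreal_mult'[OF M(1)])
      also have "\<dots> \<le> (\<integral>\<^sup>+x. ennreal (max (- M * f x) (f x)) \<partial>\<nu>)"
        by (intro nn_integral_mono ennreal_leI) auto
      also have "\<dots> \<le> ennreal p" by (rule key[OF M(1)])
      finally show False using M(2) by simp
    qed
  qed
qed

lemma uniq:
  assumes m1: "\<forall>\<pi>'. L \<pi>1 \<le> L \<pi>'" and m2: "\<forall>\<pi>'. L \<pi>2 \<le> L \<pi>'" and ne: "\<pi>1 \<noteq> \<pi>2"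
  shows "AE x in \<nu>. f x = 0"
proof -
  define m where "m = (\<pi>1 + \<pi>2) / 2"
  define D where "D x = (g_alpha \<alpha> (u x - \<pi>1 * f x) + g_alpha \<alpha> (u x - \<pi>2 * f x))/2 - g_alpha \<alpha> (u x - m * f x)" for x
  have mid: "u x - m * f x = ((u x - \<pi>1 * f x) + (u x - \<pi>2 * f x))/2" for x
    by (simp add: m_def field_simps)
  have Dpos: "f x \<noteq> 0 \<Longrightarrow> D x > 0" for x
  proof -
    assume "f x \<noteq> 0"
    then have "u x - \<pi>1 * f x \<noteq> u x - \<pi>2 * f x" using ne by simp
    from g_strict_mid[OF a this] show ?thesis unfolding D_def mid by simp
  qed
  have Dnn: "D x \<ge> 0" for x
    using Dpos[of x] by (cases "f x = 0") (auto simp: D_def m_def)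
  have Dint: "integrable \<nu> D" unfolding D_def using integ by auto
  have "integral\<^sup>L \<nu> D = (I \<pi>1 + I \<pi>2)/2 - I m"
    unfolding D_def I_def using integ by simp
  also have "\<dots> = (L \<pi>1 + L \<pi>2)/2 - L m" by (simp add: LI m_def field_simps)
  also have "\<dots> \<le> 0" using m1[rule_format, of m] m2[rule_format, of m] by simp
  finally have "integral\<^sup>L \<nu> D \<le> 0" .
  moreover have "integral\<^sup>L \<nu> D \<ge> 0" using Dnn by (intro integral_nonneg_AE) auto
  ultimately have "integral\<^sup>L \<nu> D = 0" by simp
  then have "AE x in \<nu>. D x = 0" using integral_nonneg_eq_0_iff_AE[OF Dint] Dnn by simp
  then show ?thesis by eventually_elim (use Dpos in fastforce)
qed

end

theorem theorem3p1:
  fixes T \<alpha> :: real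
    and \<nu> :: "real measure"
    and \<phi> :: "real \<Rightarrow> 'w \<Rightarrow> real"
    and \<psi> :: "real \<Rightarrow> 'w \<Rightarrow> real \<Rightarrow> real"
    and C :: "real set"
  assumes T_pos: "T > 0"
    and alpha_pos: "\<alpha> > 0"
    and nu_sets: "sets \<nu> = sets borel"
    and nu_zero: "emeasure \<nu> {0} = 0"
    and nu_levy: "(\<integral>\<^sup>+ x. ennreal (min 1 (x\<^sup>2)) \<partial>\<nu>) < \<infinity>"
    and phi_bdd: "\<exists>K. \<forall>t \<omega>. \<bar>\<phi> t \<omega>\<bar> \<le> K"
    and psi_bdd: "\<exists>K. \<forall>t \<omega> x. x \<noteq> 0 \<longrightarrow> \<bar>\<psi> t \<omega> x\<bar> \<le> K"
    and psi_meas: "\<And>t \<omega>. \<psi> t \<omega> \<in> borel_measurable borel"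
    and psi_L2: "\<And>t \<omega>. integrable \<nu> (\<lambda>x. (\<psi> t \<omega> x)\<^sup>2)"
    and psi_gt: "\<And>t \<omega> x. x \<noteq> 0 \<Longrightarrow> \<psi> t \<omega> x > -1"
    and C_closed: "closed C"
    and C_zero: "0 \<in> C"
    and cond_plus: "\<And>t \<omega>. t \<in> {0..T} \<Longrightarrow> emeasure \<nu> {x. \<psi> t \<omega> x < 0} = 0 \<Longrightarrow>
        ereal (\<phi> t \<omega>) < enn2ereal (\<integral>\<^sup>+ x. ennreal (\<psi> t \<omega> x) \<partial>\<nu>)"
    and cond_minus: "\<And>t \<omega>. t \<in> {0..T} \<Longrightarrow> emeasure \<nu> {x. \<psi> t \<omega> x > 0} = 0 \<Longrightarrow>
        ereal (\<phi> t \<omega>) > - enn2ereal (\<integral>\<^sup>+ x. ennreal (- \<psi> t \<omega> x) \<partial>\<nu>)"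
  shows "\<forall>u t \<omega>. u \<in> borel_measurable borel \<and> integrable \<nu> (\<lambda>x. (u x)\<^sup>2)
             \<and> (\<exists>B. AE x in \<nu>. \<bar>u x\<bar> \<le> B) \<and> t \<in> {0..T} \<longrightarrow>
           (\<exists>\<pi>\<in>C. \<forall>\<pi>'\<in>C. lam_obj \<nu> \<alpha> u (\<psi> t \<omega>) (\<phi> t \<omega>) \<pi> \<le> lam_obj \<nu> \<alpha> u (\<psi> t \<omega>) (\<phi> t \<omega>) \<pi>')
           \<and> (C = UNIV \<longrightarrow>
               (\<exists>!\<pi>. \<forall>\<pi>'. lam_obj \<nu> \<alpha> u (\<psi> t \<omega>) (\<phi> t \<omega>) \<pi> \<le> lam_obj \<nu> \<alpha> u (\<psi> t \<omega>) (\<phi> t \<omega>) \<pi>'))"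
  proof (intro allI impI)
  fix u :: "real \<Rightarrow> real" and t :: real and \<omega> :: 'w
  assume A: "u \<in> borel_measurable borel \<and> integrable \<nu> (\<lambda>x. (u x)\<^sup>2)
             \<and> (\<exists>B. AE x in \<nu>. \<bar>u x\<bar> \<le> B) \<and> t \<in> {0..T}"
  then obtain B where uB: "AE x in \<nu>. \<bar>u x\<bar> \<le> B" by blast
  have um: "u \<in> borel_measurable borel" and u2: "integrable \<nu> (\<lambda>x. (u x)\<^sup>2)"
    and tT: "t \<in> {0..T}" using A by auto
  obtain K where K: "\<forall>t \<omega> x. x \<noteq> 0 \<longrightarrow> \<bar>\<psi> t \<omega> x\<bar> \<le> K" using psi_bdd by blast
  have spc: "space \<nu> = UNIV" using sets_eq_imp_space_eq[OF nu_sets] by simp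
  have z: "{0::real} \<in> sets \<nu>" using nu_sets by simp
  have nz: "AE x in \<nu>. x \<noteq> 0"
    using AE_iff_measurable[OF z, of "\<lambda>x. x \<noteq> 0"] nu_zero spc by auto
  have fK: "AE x in \<nu>. \<bar>\<psi> t \<omega> x\<bar> \<le> K" using nz by eventually_elim (use K in auto)
  have fK': "AE x in \<nu>. \<bar>- \<psi> t \<omega> x\<bar> \<le> K" using fK by simp
  interpret P: S \<nu> \<alpha> u "\<psi> t \<omega>" "\<phi> t \<omega>" B K
    by unfold_locales (use alpha_pos nu_sets um psi_meas u2 psi_L2 uB fK in auto)
  interpret N: S \<nu> \<alpha> u "\<lambda>x. - \<psi> t \<omega> x" "- \<phi> t \<omega>" B K
    by unfold_locales (use alpha_pos nu_sets um psi_meas u2 psi_L2 uB fK' in auto)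
  have symm: "N.L \<pi> = P.L (-\<pi>)" for \<pi> unfolding N.L_def P.L_def lam_obj_def by simp
  obtain a where a: "a > 0" "P.L a > P.L 0" using P.one_side cond_plus[OF tT] by blast
  have Hn: "ereal (- \<phi> t \<omega>) < enn2ereal (\<integral>\<^sup>+ x. ennreal (- \<psi> t \<omega> x) \<partial>\<nu>)"
    if "emeasure \<nu> {x. - \<psi> t \<omega> x < 0} = 0"
  proof -
    have "emeasure \<nu> {x. \<psi> t \<omega> x > 0} = 0" using that by simp
    from cond_minus[OF tT this] show ?thesis
      by (simp add: ereal_uminus_less_reorder)
  qed
  obtain b where b: "b > 0" "N.L b > N.L 0" using N.one_side Hn by blast
  have bb: "P.L (-b) > P.L 0" using b symm[of b] symm[of 0] by simp
  have ex: "\<exists>\<pi>\<in>C. \<forall>\<pi>'\<in>C. P.L \<pi> \<le> P.L \<pi>'"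
    by (rule convex_min_exists[OF P.L_convex a, of "-b"]) (use b bb C_closed C_zero in auto)
  have not0: "\<not> (AE x in \<nu>. \<psi> t \<omega> x = 0)"
  proof
    assume ae: "AE x in \<nu>. \<psi> t \<omega> x = 0"
    have m1: "{x \<in> space \<nu>. \<psi> t \<omega> x < 0} \<in> sets \<nu>" by measurable
    have m2: "{x \<in> space \<nu>. \<psi> t \<omega> x > 0} \<in> sets \<nu>" by measurable
    have e1: "emeasure \<nu> {x. \<psi> t \<omega> x < 0} = 0"
    proof -
      have "AE x in \<nu>. \<not> \<psi> t \<omega> x < 0" using ae by eventually_elim simp
      then show ?thesis
        using AE_iff_measurable[of "{x. \<psi> t \<omega> x < 0}" \<nu> "\<lambda>x. \<not> \<psi> t \<omega> x < 0"] m1 spc by auto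
    qed
    have e2: "emeasure \<nu> {x. \<psi> t \<omega> x > 0} = 0"
    proof -
      have "AE x in \<nu>. \<not> \<psi> t \<omega> x > 0" using ae by eventually_elim simp
      then show ?thesis
        using AE_iff_measurable[of "{x. \<psi> t \<omega> x > 0}" \<nu> "\<lambda>x. \<not> \<psi> t \<omega> x > 0"] m2 spc by auto
    qed
    have i1: "(\<integral>\<^sup>+ x. ennreal (\<psi> t \<omega> x) \<partial>\<nu>) = 0"
    proof (subst nn_integral_0_iff_AE)
      show "AE x in \<nu>. ennreal (\<psi> t \<omega> x) = 0" using ae by eventually_elim simp
    qed measurable
    have i2: "(\<integral>\<^sup>+ x. ennreal (- \<psi> t \<omega> x) \<partial>\<nu>) = 0"
    proof (subst nn_integral_0_iff_AE)
      show "AE x in \<nu>. ennreal (- \<psi> t \<omega> x) = 0" using ae by eventually_elim simp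
    qed measurable
    from cond_plus[OF tT e1] cond_minus[OF tT e2] i1 i2 show False by (simp add: zero_ennreal.rep_eq)
  qed
  show "(\<exists>\<pi>\<in>C. \<forall>\<pi>'\<in>C. lam_obj \<nu> \<alpha> u (\<psi> t \<omega>) (\<phi> t \<omega>) \<pi> \<le> lam_obj \<nu> \<alpha> u (\<psi> t \<omega>) (\<phi> t \<omega>) \<pi>')
           \<and> (C = UNIV \<longrightarrow>
               (\<exists>!\<pi>. \<forall>\<pi>'. lam_obj \<nu> \<alpha> u (\<psi> t \<omega>) (\<phi> t \<omega>) \<pi> \<le> lam_obj \<nu> \<alpha> u (\<psi> t \<omega>) (\<phi> t \<omega>) \<pi>'))"
  proof (intro conjI impI)
    show "\<exists>\<pi>\<in>C. \<forall>\<pi>'\<in>C. lam_obj \<nu> \<alpha> u (\<psi> t \<omega>) (\<phi> t \<omega>) \<pi> \<le> lam_obj \<nu> \<alpha> u (\<psi> t \<omega>) (\<phi> t \<omega>) \<pi>'"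
      using ex unfolding P.L_def .
    assume CU: "C = UNIV"
    from ex CU obtain \<pi> where \<pi>: "\<forall>\<pi>'. P.L \<pi> \<le> P.L \<pi>'" by auto
    have "\<exists>!\<pi>. \<forall>\<pi>'. P.L \<pi> \<le> P.L \<pi>'"
    proof (rule ex1I[of _ \<pi>])
      show "\<forall>\<pi>'. P.L \<pi> \<le> P.L \<pi>'" by (rule \<pi>)
      fix \<pi>2 assume h: "\<forall>\<pi>'. P.L \<pi>2 \<le> P.L \<pi>'"
      show "\<pi>2 = \<pi>"
      proof (rule ccontr)
        assume "\<pi>2 \<noteq> \<pi>"
        from P.uniq[OF h \<pi> this] not0 show False by simp
      qed
    qed
    then show "\<exists>!\<pi>. \<forall>\<pi>'. lam_obj \<nu> \<alpha> u (\<psi> t \<omega>) (\<phi> t \<omega>) \<pi> \<le> lam_obj \<nu> \<alpha> u (\<psi> t \<omega>) (\<phi> t \<omega>) \<pi>'"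
      unfolding P.L_def .
  qed
qed

end
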